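(* For any $h\in[1,k]$ and any $p\in\mathbb{N}$, the companion matrix $A=A(s)$ satisfies $$(-1)^{k-h}\frac{\partial A^p}{\partial s_h}=\frac{\partial A^p}{\partial s_k}A^{k-h}.$$
   Context: Fix an integer $k\ge 2$ and coordinates $s=(s_1,\dots,s_k)$ on $\mathbb{C}^k$. $A(s)$ is the $(k,k)$ companion matrix of $P_s(z)=\sum_{h=0}^k(-1)^hs_hz^{k-h}$ ($s_0=1$): its entries are $A_{i,i+1}=1$ for $i\in[1,k-1]$, its last row is $A_{k,j}=(-1)^{k-j}s_{k+1-j}$ for $j\in[1,k]$, and all other entries are $0$. *)

theory Defs
  imports "HOL-Analysis.Derivative" "Jordan_Normal_Form.Matrix"
begin

text \<open>The coordinate s_h (1 \<le> h \<le> k)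
  is the value s h of a function s :: nat \<Rightarrow> complex; other values are irrelevant.
  Row i (0-based) with i < k-1 has a 1 in column i+1; the last row has entry
  (-1)^(k-1-j) * s (k-j) in column j (0-based), i.e. A_{k,j} = (-1)^(k-j) s_{k+1-j} 1-based.\<close>
definition companion :: "nat \<Rightarrow> (nat \<Rightarrow> complex) \<Rightarrow> complex mat" where
  "companion k s = mat k k (\<lambda>(i,j).
     if i + 1 < k \<and> j = i + 1 then 1
     else if i + 1 = k then (-1) ^ (k - 1 - j) * s (k - j)
     else 0)"

definition dpow :: "nat \<Rightarrow> nat \<Rightarrow> nat \<Rightarrow> (nat \<Rightarrow> complex) \<Rightarrow> complex mat" where
  "dpow k h p s = mat k k (\<lambda>(i,j).
     deriv (\<lambda>t. (companion k (s(h := t)) ^\<^sub>m p) $$ (i,j)) (s h))"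

end

theory Submission
  imports Defs
begin

definition Em :: "nat \<Rightarrow> nat \<Rightarrow> nat \<Rightarrow> complex \<Rightarrow> complex mat" where
  "Em k a b c = mat k k (\<lambda>(i,j). if i = a \<and> j = b then c else 0)"

fun Dp :: "nat \<Rightarrow> complex mat \<Rightarrow> complex mat \<Rightarrow> nat \<Rightarrow> complex mat" where
  "Dp k A D 0 = 0\<^sub>m k k"
| "Dp k A D (Suc p) = Dp k A D p * A + A ^\<^sub>m p * D"

lemma companion_carrier[simp]: "companion k s \<in> carrier_mat k k"
  unfolding companion_def by auto

lemma companion_dims[simp]: "dim_row (companion k s) = k" "dim_col (companion k s) = k"
  unfolding companion_def by auto

lemma Em_carrier[simp]: "Em k a b c \<in> carrier_mat k k"
  unfolding Em_def by auto

lemma Dp_carrier[simp]: "A \<in> carrier_mat k k \<Longrightarrow> D \<in> carrier_mat k k \<Longrightarrow> Dp k A D p \<in> carrier_mat k k"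
  by (induct p) auto


lemma comp_entry: "i < k \<Longrightarrow> j < k \<Longrightarrow> companion k s' $$ (i,j) =
   (if i + 1 < k \<and> j = i + 1 then 1 else if i + 1 = k then (-1) ^ (k - 1 - j) * s' (k - j) else 0)"
  unfolding companion_def by simp

lemma Em_entry: "i < k \<Longrightarrow> j < k \<Longrightarrow> Em k a b c $$ (i,j) = (if i = a \<and> j = b then c else 0)"
  unfolding Em_def by simp

lemma Dp_dims[simp]: "A \<in> carrier_mat k k \<Longrightarrow> D \<in> carrier_mat k k \<Longrightarrow>
   dim_row (Dp k A D p) = k \<and> dim_col (Dp k A D p) = k"
  using Dp_carrier[of A k D p] carrier_matD[of "Dp k A D p" k k] by blast

lemma deriv_entry:
  assumes "1 \<le> h" "h \<le> k" "i < k" "j < k"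
  shows "((\<lambda>t. companion k (s(h:=t)) $$ (i,j)) has_field_derivative
     (Em k (k-1) (k-h) ((-1)^(h-1)) $$ (i,j))) (at x)"
proof -
  consider (a) "i + 1 < k \<and> j = i + 1" | (b) "\<not>(i + 1 < k \<and> j = i + 1)" "i + 1 = k" "k - j = h"
    | (c) "\<not>(i + 1 < k \<and> j = i + 1)" "i + 1 = k" "k - j \<noteq> h"
    | (d) "\<not>(i + 1 < k \<and> j = i + 1)" "i + 1 \<noteq> k" by blast
  then show ?thesis
  proof cases
    case a
    have ne: "\<not> (i = k - 1 \<and> j = k - h)" using a by arith
    have f: "(\<lambda>t. companion k (s(h:=t)) $$ (i,j)) = (\<lambda>t. 1)"
    proof
      fix t show "companion k (s(h:=t)) $$ (i,j) = 1"
        using comp_entry[OF assms(3,4), of "s(h:=t)"] a by simp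
    qed
    have g: "Em k (k-1) (k-h) ((-1)^(h-1)) $$ (i,j) = 0"
      using Em_entry[OF assms(3,4), of "k-1" "k-h" "(-1)^(h-1)"] ne by simp
    show ?thesis unfolding f g by (rule DERIV_const)
  next
    case b
    have ij: "i = k - 1 \<and> j = k - h" using b assms by arith
    have e: "(-1::complex)^(k-1-j) = (-1)^(h-1)"
    proof -
      have "k - 1 - j = h - 1" using b assms by arith
      then show ?thesis by simp
    qed
    have f: "(\<lambda>t. companion k (s(h:=t)) $$ (i,j)) = (\<lambda>t. (-1::complex)^(k-1-j) * t)"
    proof
      fix t show "companion k (s(h:=t)) $$ (i,j) = (-1::complex)^(k-1-j) * t"
        using comp_entry[OF assms(3,4), of "s(h:=t)"] b(1,2,3) by simp
    qed
    have g: "Em k (k-1) (k-h) ((-1)^(h-1)) $$ (i,j) = (-1::complex)^(k-1-j)"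
      using Em_entry[OF assms(3,4), of "k-1" "k-h" "(-1)^(h-1)"] ij e by simp
    have "((\<lambda>t. (-1::complex)^(k-1-j) * t) has_field_derivative (-1)^(k-1-j)) (at x)"
      by (auto intro!: derivative_eq_intros)
    then show ?thesis unfolding f g .
  next
    case c
    have ne: "\<not> (i = k - 1 \<and> j = k - h)" using c assms by arith
    have f: "(\<lambda>t. companion k (s(h:=t)) $$ (i,j)) = (\<lambda>t. (-1::complex)^(k-1-j) * s (k-j))"
    proof
      fix t show "companion k (s(h:=t)) $$ (i,j) = (-1::complex)^(k-1-j) * s (k-j)"
        using comp_entry[OF assms(3,4), of "s(h:=t)"] c(1,2,3) by simp
    qed
    have g: "Em k (k-1) (k-h) ((-1)^(h-1)) $$ (i,j) = 0"
      using Em_entry[OF assms(3,4), of "k-1" "k-h" "(-1)^(h-1)"] ne by simp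
    show ?thesis unfolding f g by (rule DERIV_const)
  next
    case d
    have ne: "\<not> (i = k - 1 \<and> j = k - h)" using d assms by arith
    have f: "(\<lambda>t. companion k (s(h:=t)) $$ (i,j)) = (\<lambda>t. 0)"
    proof
      fix t show "companion k (s(h:=t)) $$ (i,j) = 0"
        using comp_entry[OF assms(3,4), of "s(h:=t)"] d by simp
    qed
    have g: "Em k (k-1) (k-h) ((-1)^(h-1)) $$ (i,j) = 0"
      using Em_entry[OF assms(3,4), of "k-1" "k-h" "(-1)^(h-1)"] ne by simp
    show ?thesis unfolding f g by (rule DERIV_const)
  qed
qed

lemma pow_entry_deriv:
  assumes "1 \<le> h" "h \<le> k"
  shows "\<forall>i<k. \<forall>j<k. ((\<lambda>t. (companion k (s(h:=t)) ^\<^sub>m p) $$ (i,j)) has_field_derivative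
     (Dp k (companion k (s(h:=x))) (Em k (k-1) (k-h) ((-1)^(h-1))) p $$ (i,j))) (at x)"
proof (induct p)
  case 0
  show ?case
  proof (intro allI impI)
    fix i j assume "i < k" "j < k"
    then show "((\<lambda>t. (companion k (s(h:=t)) ^\<^sub>m 0) $$ (i,j)) has_field_derivative
     (Dp k (companion k (s(h:=x))) (Em k (k-1) (k-h) ((-1)^(h-1))) 0 $$ (i,j))) (at x)"
      by (cases "i = j") (simp_all add: companion_def)
  qed
next
  case (Suc p)
  define A where "A = (\<lambda>t. companion k (s(h:=t)))"
  define D where "D = Em k (k-1) (k-h) ((-1::complex)^(h-1))"
  show ?case
  proof (intro allI impI)
    fix i j assume ij: "i < k" "j < k"
    have IH: "\<And>l. l < k \<Longrightarrow> ((\<lambda>t. (A t ^\<^sub>m p) $$ (i,l)) has_field_derivative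
          (Dp k (A x) D p $$ (i,l))) (at x)"
      using Suc ij unfolding A_def D_def by blast
    have dA: "\<And>l. l < k \<Longrightarrow> ((\<lambda>t. A t $$ (l,j)) has_field_derivative D $$ (l,j)) (at x)"
      unfolding A_def D_def using deriv_entry[OF assms _ ij(2)] by blast
    have f: "(\<lambda>t. (A t ^\<^sub>m Suc p) $$ (i,j)) = (\<lambda>t. \<Sum>l\<in>{0..<k}. (A t ^\<^sub>m p) $$ (i,l) * A t $$ (l,j))"
      using ij by (simp add: A_def scalar_prod_def)
    have v: "Dp k (A x) D (Suc p) $$ (i,j) = (\<Sum>l\<in>{0..<k}. Dp k (A x) D p $$ (i,l) * A x $$ (l,j) + (A x ^\<^sub>m p) $$ (i,l) * D $$ (l,j))"
    proof -
      have c1: "Dp k (A x) D p \<in> carrier_mat k k" by (simp add: A_def D_def)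
      have c2: "A x \<in> carrier_mat k k" by (simp add: A_def)
      have c3: "D \<in> carrier_mat k k" by (simp add: D_def)
      show ?thesis using ij c1 c2 c3 by (simp add: scalar_prod_def sum.distrib)
    qed
    have "((\<lambda>t. \<Sum>l\<in>{0..<k}. (A t ^\<^sub>m p) $$ (i,l) * A t $$ (l,j)) has_field_derivative
       (\<Sum>l\<in>{0..<k}. Dp k (A x) D p $$ (i,l) * A x $$ (l,j) + (A x ^\<^sub>m p) $$ (i,l) * D $$ (l,j))) (at x)"
      apply (rule DERIV_sum)
      apply (rule DERIV_mult'[THEN DERIV_cong])
      using IH dA by auto
    then show "((\<lambda>t. (companion k (s(h:=t)) ^\<^sub>m Suc p) $$ (i,j)) has_field_derivative
     (Dp k (companion k (s(h:=x))) (Em k (k-1) (k-h) ((-1)^(h-1))) (Suc p) $$ (i,j))) (at x)"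
      using f v unfolding A_def D_def by simp
  qed
qed

lemma dpow_eq:
  assumes "1 \<le> h" "h \<le> k"
  shows "dpow k h p s = Dp k (companion k s) (Em k (k-1) (k-h) ((-1)^(h-1))) p"
proof (rule eq_matI)
  fix i j assume ij: "i < dim_row (Dp k (companion k s) (Em k (k-1) (k-h) ((-1)^(h-1))) p)"
     "j < dim_col (Dp k (companion k s) (Em k (k-1) (k-h) ((-1)^(h-1))) p)"
  have c: "Dp k (companion k s) (Em k (k-1) (k-h) ((-1)^(h-1))) p \<in> carrier_mat k k" by simp
  then have ij': "i < k" "j < k" using ij unfolding carrier_mat_def by auto
  have "((\<lambda>t. (companion k (s(h:=t)) ^\<^sub>m p) $$ (i,j)) has_field_derivative
     (Dp k (companion k (s(h:=s h))) (Em k (k-1) (k-h) ((-1)^(h-1))) p $$ (i,j))) (at (s h))"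
    using pow_entry_deriv[OF assms] ij' by blast
  then have "deriv (\<lambda>t. (companion k (s(h:=t)) ^\<^sub>m p) $$ (i,j)) (s h) =
     Dp k (companion k s) (Em k (k-1) (k-h) ((-1)^(h-1))) p $$ (i,j)"
    by (simp add: DERIV_imp_deriv)
  then show "dpow k h p s $$ (i,j) = Dp k (companion k s) (Em k (k-1) (k-h) ((-1)^(h-1))) p $$ (i,j)"
    using ij' by (simp add: dpow_def)
qed (use assms in \<open>auto simp: dpow_def\<close>)


lemma Em_mult_comp:
  assumes "m + 1 < k"
  shows "Em k (k-1) m c * companion k s = Em k (k-1) (m+1) c"
proof (rule eq_matI)
  fix i j assume "i < dim_row (Em k (k-1) (m+1) c)" "j < dim_col (Em k (k-1) (m+1) c)"
  then have ij: "i < k" "j < k" by (auto simp: Em_def)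
  have "(Em k (k-1) m c * companion k s) $$ (i,j) =
      (\<Sum>l\<in>{0..<k}. Em k (k-1) m c $$ (i,l) * companion k s $$ (l,j))"
    using ij by (simp add: Em_def scalar_prod_def)
  also have "\<dots> = (\<Sum>l\<in>{0..<k}. if l = m then (if i = k-1 then c else 0) * companion k s $$ (m,j) else 0)"
    by (rule sum.cong) (auto simp: Em_entry ij)
  also have "\<dots> = (if i = k-1 then c else 0) * companion k s $$ (m,j)"
    using assms by simp
  also have "\<dots> = Em k (k-1) (m+1) c $$ (i,j)"
    using assms ij by (simp add: comp_entry Em_entry)
  finally show "(Em k (k-1) m c * companion k s) $$ (i,j) = Em k (k-1) (m+1) c $$ (i,j)" .
qed (auto simp: Em_def)

lemma Em_pow:
  "m < k \<Longrightarrow> Em k (k-1) 0 c * companion k s ^\<^sub>m m = Em k (k-1) m c"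
proof (induct m)
  case 0
  then show ?case using right_mult_one_mat[OF Em_carrier[of k "k-1" 0 c]] by simp
next
  case (Suc m)
  have "Em k (k-1) 0 c * companion k s ^\<^sub>m Suc m = (Em k (k-1) 0 c * companion k s ^\<^sub>m m) * companion k s"
    by (simp add: assoc_mult_mat[of _ k k _ k _ k])
  also have "\<dots> = Em k (k-1) m c * companion k s" using Suc by simp
  also have "\<dots> = Em k (k-1) (Suc m) c" using Suc Em_mult_comp[of m k c s] by simp
  finally show ?case .
qed

lemma Em_smult: "Em k a b (c * d) = c \<cdot>\<^sub>m Em k a b d"
  by (rule eq_matI) (auto simp: Em_def)

lemma pow_comm: "(A :: complex mat) \<in> carrier_mat k k \<Longrightarrow> A * A ^\<^sub>m m = A ^\<^sub>m m * A"
proof (induct m)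
  case 0 then show ?case by simp
next
  case (Suc m)
  have "A * A ^\<^sub>m Suc m = A * (A ^\<^sub>m m * A)" by simp
  also have "\<dots> = (A * A ^\<^sub>m m) * A" using Suc(2) by (simp add: assoc_mult_mat[of _ k k _ k _ k])
  also have "\<dots> = (A ^\<^sub>m m * A) * A" using Suc by simp
  also have "\<dots> = A ^\<^sub>m Suc m * A" by simp
  finally show ?case .
qed

lemma main_alg:
  assumes "1 \<le> h" "h \<le> k"
  shows "((-1) ^ (k - h)) \<cdot>\<^sub>m Dp k (companion k s) (Em k (k-1) (k-h) ((-1)^(h-1))) p
    = Dp k (companion k s) (Em k (k-1) (k-k) ((-1)^(k-1))) p * (companion k s ^\<^sub>m (k - h))"
proof -
  define A where "A = companion k s"
  define Dh where "Dh = Em k (k-1) (k-h) ((-1::complex)^(h-1))"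
  define Dk where "Dk = Em k (k-1) (k-k) ((-1::complex)^(k-1))"
  define c where "c = ((-1::complex) ^ (k - h))"
  define m where "m = k - h"
  have A: "A \<in> carrier_mat k k" and Dh: "Dh \<in> carrier_mat k k" and Dk: "Dk \<in> carrier_mat k k"
    and Am: "A ^\<^sub>m m \<in> carrier_mat k k"
    by (simp_all add: A_def Dh_def Dk_def)
  have key: "Dk * A ^\<^sub>m m = c \<cdot>\<^sub>m Dh"
  proof -
    have "Dk * A ^\<^sub>m m = Em k (k-1) m ((-1)^(k-1))"
      unfolding Dk_def A_def using Em_pow[of m k] assms by (simp add: m_def)
    also have "(-1::complex)^(k-1) = c * (-1)^(h-1)"
    proof -
      have "k - 1 = (k-h) + (h-1)" using assms by simp
      then show ?thesis unfolding c_def by (metis power_add)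
    qed
    finally show ?thesis by (simp add: Em_smult Dh_def m_def)
  qed
  have "c \<cdot>\<^sub>m Dp k A Dh p = Dp k A Dk p * A ^\<^sub>m m"
  proof (induct p)
    case 0
    show ?case using A Am by simp
  next
    case (Suc p)
    define X where "X = Dp k A Dh p"
    define Y where "Y = Dp k A Dk p"
    have X: "X \<in> carrier_mat k k" and Y: "Y \<in> carrier_mat k k" and Ap: "A ^\<^sub>m p \<in> carrier_mat k k"
      using A Dh Dk by (simp_all add: X_def Y_def)
    have "c \<cdot>\<^sub>m Dp k A Dh (Suc p) = c \<cdot>\<^sub>m (X * A) + c \<cdot>\<^sub>m (A ^\<^sub>m p * Dh)"
      unfolding Dp.simps X_def[symmetric]
      by (rule add_smult_distrib_left_mat[of _ k k]) (use X A Ap Dh in \<open>auto intro: mult_carrier_mat\<close>)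
    also have "\<dots> = (c \<cdot>\<^sub>m X) * A + A ^\<^sub>m p * (c \<cdot>\<^sub>m Dh)"
      using X A Ap Dh by (simp add: mult_smult_assoc_mat[of _ k k] mult_smult_distrib[of _ k k])
    also have "\<dots> = (Y * A ^\<^sub>m m) * A + A ^\<^sub>m p * (Dk * A ^\<^sub>m m)"
      using Suc key by (simp add: X_def Y_def)
    also have "\<dots> = Y * (A * A ^\<^sub>m m) + (A ^\<^sub>m p * Dk) * A ^\<^sub>m m"
      using Y A Am Ap Dk pow_comm[OF A, of m]
      by (simp add: assoc_mult_mat[of _ k k _ k _ k])
    also have "\<dots> = (Y * A) * A ^\<^sub>m m + (A ^\<^sub>m p * Dk) * A ^\<^sub>m m"
      using Y A Am by (simp add: assoc_mult_mat[of _ k k _ k _ k])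
    also have "\<dots> = (Y * A + A ^\<^sub>m p * Dk) * A ^\<^sub>m m"
      by (rule add_mult_distrib_mat[symmetric, of _ k k]) (use Y A Am Ap Dk in \<open>auto intro: mult_carrier_mat\<close>)
    also have "\<dots> = Dp k A Dk (Suc p) * A ^\<^sub>m m" by (simp add: Y_def)
    finally show ?case .
  qed
  then show ?thesis by (simp add: A_def Dh_def Dk_def c_def m_def)
qed

theorem mainTheorem6:
  fixes k h p :: nat and s :: "nat \<Rightarrow> complex"
  assumes "2 \<le> k" and "1 \<le> h" and "h \<le> k"
  shows "((-1) ^ (k - h)) \<cdot>\<^sub>m dpow k h p s = dpow k k p s * (companion k s ^\<^sub>m (k - h))"
  using main_alg[OF assms(2,3), of s p] dpow_eq[OF assms(2,3), of p s] dpow_eq[of k k p s] assms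
  by simp

end
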